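(* Assume the balanced case $\beta_0=C$, $A>0$ and $\Delta=B^2-4AC<0$; set $p=-B/(2A)$, $q=\sqrt{-\Delta}/(2A)>0$. Then, with the principal branch $\arctan\in(-\pi/2,\pi/2)$ and as an identity of analytic functions for $t$ near $0$ (away from zeros of the cosine), \[ w(x,t)=\exp\bigl[(\alpha_0p+\gamma_0)t\bigr]\left[\frac{q}{\sqrt{(x-p)^2+q^2}\,\cos\bigl(Aqt+\arctan\frac{x-p}{q}\bigr)}\right]^{\alpha_0/A}. \]
   Context: Fix nonnegative integers $a,b,c,\alpha_0,\beta_0,\gamma_0$, $\alpha_k=ak+\alpha_0$, $\beta_k=bk+\beta_0$, $\gamma_k=ck+\gamma_0$; $w_{0,0}=1$, $w_{n,k}=0$ for $k<0$ or $k>n$, $w_{n+1,k}=\alpha_{k-1}w_{n,k-1}+\gamma_k w_{n,k}+\beta_k w_{n,k+1}$. $A=a$, $B=c$, $C=b$; balanced means $\beta_0=C$. $P_n(x)=\sum_k w_{n,k}x^k$, $w(x,t)=\sum_{n\ge0}P_n(x)t^n/n!$. *)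

theory Defs
  imports Complex_Main
begin

fun wtri :: "nat \<Rightarrow> nat \<Rightarrow> nat \<Rightarrow> nat \<Rightarrow> nat \<Rightarrow> nat \<Rightarrow> nat \<Rightarrow> int \<Rightarrow> int" where
  "wtri a b c al0 be0 ga0 0 k = (if k = 0 then 1 else 0)"
| "wtri a b c al0 be0 ga0 (Suc n) k =
     (if k < 0 \<or> k > int (Suc n) then 0
      else (int a * (k - 1) + int al0) * wtri a b c al0 be0 ga0 n (k - 1)
         + (int c * k + int ga0) * wtri a b c al0 be0 ga0 n k
         + (int b * k + int be0) * wtri a b c al0 be0 ga0 n (k + 1))"

definition Ppoly :: "nat \<Rightarrow> nat \<Rightarrow> nat \<Rightarrow> nat \<Rightarrow> nat \<Rightarrow> nat \<Rightarrow> nat \<Rightarrow> real \<Rightarrow> real" where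
  "Ppoly a b c al0 be0 ga0 n x =
     (\<Sum>k\<le>n. real_of_int (wtri a b c al0 be0 ga0 n (int k)) * x ^ k)"

end

theory Submission
  imports Defs
begin


lemma w_out: "k < 0 \<or> k > int n \<Longrightarrow> wtri a b c al0 be0 ga0 n k = 0"
  by (induction n arbitrary: k) auto

lemma w_nonneg: "0 \<le> wtri a b c al0 be0 ga0 n k"
proof (induction n arbitrary: k)
  case 0 then show ?case by simp
next
  case (Suc n)
  show ?case
  proof (cases "k < 0 \<or> k > int (Suc n)")
    case True then show ?thesis by simp
  next
    case False
    have t1: "0 \<le> (int a * (k - 1) + int al0) * wtri a b c al0 be0 ga0 n (k - 1)"
    proof (cases "k = 0")
      case True then show ?thesis using w_out[of "k-1" n] by simp
    next
      case False then have "k \<ge> 1" using \<open>\<not> (k < 0 \<or> k > int (Suc n))\<close> by auto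
      then show ?thesis using Suc.IH[of "k-1"] by simp
    qed
    have t2: "0 \<le> (int c * k + int ga0) * wtri a b c al0 be0 ga0 n k"
      using Suc.IH[of k] False by simp
    have t3: "0 \<le> (int b * k + int be0) * wtri a b c al0 be0 ga0 n (k+1)"
      using Suc.IH[of "k+1"] False by simp
    show ?thesis using False t1 t2 t3 by simp
  qed
qed

definition Pd :: "nat \<Rightarrow> nat \<Rightarrow> nat \<Rightarrow> nat \<Rightarrow> nat \<Rightarrow> nat \<Rightarrow> nat \<Rightarrow> real \<Rightarrow> real" where
  "Pd a b c al0 be0 ga0 n y =
     (\<Sum>k\<le>n. real_of_int (wtri a b c al0 be0 ga0 n (int k)) * (real k * y ^ (k - 1)))"

lemma Ppoly_deriv: "(Ppoly a b c al0 be0 ga0 n has_real_derivative Pd a b c al0 be0 ga0 n y) (at y)"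
  unfolding Ppoly_def[abs_def] Pd_def
  by (auto intro!: derivative_eq_intros sum.cong)



lemma P_rec:
  fixes y :: real
  shows "Ppoly a b c al0 b ga0 (Suc n) y = (real al0*y + real ga0) * Ppoly a b c al0 b ga0 n y
          + (real a*y^2 + real c*y + real b) * Pd a b c al0 b ga0 n y"
proof -
  define W where "W = (\<lambda>k::int. real_of_int (wtri a b c al0 b ga0 n k))"
  define f1 where "f1 = (\<lambda>k::nat. (real a*(real k - 1) + real al0) * W (int k - 1) * y^k)"
  define f2 where "f2 = (\<lambda>k::nat. (real c*real k + real ga0) * W (int k) * y^k)"
  define f3 where "f3 = (\<lambda>k::nat. (real b*real k + real b) * W (int k + 1) * y^k)"
  define g where "g = (\<lambda>k::nat. real b * real k * W (int k) * y^(k-1))"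
  have Wout: "W k = 0" if "k < 0 \<or> k > int n" for k
    unfolding W_def using w_out[OF that] by simp
  have A: "Ppoly a b c al0 b ga0 (Suc n) y = (\<Sum>k\<le>Suc n. f1 k) + (\<Sum>k\<le>Suc n. f2 k) + (\<Sum>k\<le>Suc n. f3 k)"
    unfolding Ppoly_def sum.distrib[symmetric]
    by (rule sum.cong) (auto simp: f1_def f2_def f3_def W_def algebra_simps)
  have B: "(\<Sum>k\<le>Suc n. f1 k) = (\<Sum>j\<le>n. (real a*real j + real al0) * W (int j) * y^(Suc j))"
    unfolding sum.atMost_Suc_shift by (simp add: f1_def Wout)
  have C: "(\<Sum>k\<le>Suc n. f2 k) = (\<Sum>j\<le>n. f2 j)"
    by (simp add: f2_def Wout)
  have D1: "(\<Sum>k\<le>Suc n. f3 k) = (\<Sum>j\<le>n. f3 j)"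
    by (simp add: f3_def Wout)
  have D2: "(\<Sum>j\<le>Suc n. g j) = (\<Sum>j\<le>n. f3 j)"
    unfolding sum.atMost_Suc_shift by (simp add: g_def f3_def algebra_simps)
  have D3: "(\<Sum>j\<le>Suc n. g j) = (\<Sum>j\<le>n. g j)"
    by (simp add: g_def Wout)
  have E: "(real al0*y + real ga0) * Ppoly a b c al0 b ga0 n y
          + (real a*y^2 + real c*y + real b) * Pd a b c al0 b ga0 n y
       = (\<Sum>j\<le>n. (real a*real j + real al0) * W (int j) * y^(Suc j) + f2 j + g j)"
    unfolding Ppoly_def Pd_def sum_distrib_left sum.distrib[symmetric]
  proof (rule sum.cong)
    fix j assume "j \<in> {..n}"
    show "(real al0 * y + real ga0) * (real_of_int (wtri a b c al0 b ga0 n (int j)) * y ^ j) +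
         (real a * y\<^sup>2 + real c * y + real b) *
         (real_of_int (wtri a b c al0 b ga0 n (int j)) * (real j * y ^ (j - 1))) =
         (real a * real j + real al0) * W (int j) * y ^ Suc j + f2 j + g j"
    proof (cases j)
      case 0 then show ?thesis by (simp add: f2_def g_def W_def algebra_simps)
    next
      case (Suc m) then show ?thesis
        by (simp add: f2_def g_def W_def algebra_simps power2_eq_square)
    qed
  qed simp
  show ?thesis using A B C D1 D2 D3 E by (simp add: sum.distrib)
qed



lemma P_bound:
  fixes y Z :: real
  assumes Z1: "Z \<ge> 1" and yZ: "\<bar>y\<bar> \<le> Z"
  shows "\<bar>Ppoly a b c al0 b ga0 n y\<bar>
     \<le> fact n * (real al0*Z + real ga0 + real a*Z^2 + real c*Z + real b)^n"
proof -
  define K where "K = real al0*Z + real ga0 + real a*Z^2 + real c*Z + real b"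
  define V where "V = (\<lambda>n. Ppoly a b c al0 b ga0 n Z)"
  define Q where "Q = real a*Z^2 + real c*Z + real b"
  have Q0: "Q \<ge> 0" using Z1 by (simp add: Q_def)
  have L0: "real al0*Z + real ga0 \<ge> 0" using Z1 by simp
  have QK: "Q \<le> K" "real al0*Z + real ga0 \<le> K" using Z1 by (auto simp: Q_def K_def)
  have wn: "0 \<le> real_of_int (wtri a b c al0 b ga0 m k)" for m k using w_nonneg by simp
  have V0: "V m \<ge> 0" for m unfolding V_def Ppoly_def using Z1 wn
    by (intro sum_nonneg) auto
  have absle: "\<bar>Ppoly a b c al0 b ga0 m y\<bar> \<le> V m" for m
  proof -
    have "\<bar>Ppoly a b c al0 b ga0 m y\<bar> \<le> (\<Sum>k\<le>m. \<bar>real_of_int (wtri a b c al0 b ga0 m (int k)) * y ^ k\<bar>)"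
      unfolding Ppoly_def by (rule sum_abs)
    also have "\<dots> \<le> V m" unfolding V_def Ppoly_def
    proof (rule sum_mono)
      fix k assume "k \<in> {..m}"
      have "\<bar>y\<bar>^k \<le> Z^k" using yZ by (intro power_mono) auto
      then show "\<bar>real_of_int (wtri a b c al0 b ga0 m (int k)) * y ^ k\<bar>
          \<le> real_of_int (wtri a b c al0 b ga0 m (int k)) * Z ^ k"
        using wn[of m "int k"] by (simp add: abs_mult power_abs mult_left_mono)
    qed
    finally show ?thesis .
  qed
  have Pdle: "Pd a b c al0 b ga0 m Z \<le> real m * V m" for m
    unfolding Pd_def V_def Ppoly_def sum_distrib_left
  proof (rule sum_mono)
    fix k assume k: "k \<in> {..m}"
    have "real k * Z^(k-1) \<le> real m * Z^k"
    proof (cases k)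
      case 0 then show ?thesis using Z1 by simp
    next
      case (Suc j)
      have "real k \<le> real m" using k by simp
      moreover have "Z^(k-1) \<le> Z^k" using Z1 Suc by simp
      ultimately show ?thesis using Z1 by (intro mult_mono) auto
    qed
    note kk = this
    show "real_of_int (wtri a b c al0 b ga0 m (int k)) * (real k * Z ^ (k - 1))
         \<le> real m * (real_of_int (wtri a b c al0 b ga0 m (int k)) * Z ^ k)"
      using mult_left_mono[OF kk wn[of m "int k"]] by (simp add: algebra_simps)
  qed
  have Pd0: "Pd a b c al0 b ga0 m Z \<ge> 0" for m unfolding Pd_def using Z1 wn
    by (intro sum_nonneg) auto
  have step: "V (Suc m) \<le> real (Suc m) * K * V m" for m
  proof -
    have "V (Suc m) = (real al0*Z + real ga0) * V m + Q * Pd a b c al0 b ga0 m Z"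
      unfolding V_def Q_def by (rule P_rec)
    also have "\<dots> \<le> K * V m + K * (real m * V m)"
      using QK Q0 L0 V0[of m] Pdle[of m] Pd0[of m]
      by (intro add_mono mult_mono) auto
    also have "\<dots> = real (Suc m) * K * V m" by (simp add: algebra_simps)
    finally show ?thesis .
  qed
  have K0: "K \<ge> 0" using QK Q0 by simp
  have "V m \<le> fact m * K^m" for m
  proof (induction m)
    case 0 then show ?case by (simp add: V_def Ppoly_def)
  next
    case (Suc m)
    have "V (Suc m) \<le> real (Suc m) * K * V m" by (rule step)
    also have "\<dots> \<le> real (Suc m) * K * (fact m * K^m)"
      using Suc.IH K0 by (intro mult_left_mono) auto
    also have "\<dots> = fact (Suc m) * K^(Suc m)" by (simp add: algebra_simps)
    finally show ?case .
  qed
  then show ?thesis using absle[of n] unfolding K_def by (meson order_trans)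
qed



theorem mainTheorem9:
  fixes a b c al0 be0 ga0 :: nat and x :: real
  assumes balanced: "be0 = b"
    and Apos: "a > 0"
    and Delta_neg: "real c ^ 2 - 4 * real a * real b < 0"
  defines "p \<equiv> - real c / (2 * real a)"
    and "q \<equiv> sqrt (4 * real a * real b - real c ^ 2) / (2 * real a)"
  shows "\<exists>\<delta>>0. \<forall>t::real. \<bar>t\<bar> < \<delta> \<longrightarrow>
     (\<lambda>n. Ppoly a b c al0 be0 ga0 n x * t ^ n / fact n) sums
       (exp ((real al0 * p + real ga0) * t) *
        (q / (sqrt ((x - p)^2 + q^2) * cos (real a * q * t + arctan ((x - p) / q))))
          powr (real al0 / real a))"
proof -
  have a0: "real a > 0" using Apos by simp
  have q0: "q > 0" unfolding q_def using Delta_neg a0 by simp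
  have qsq: "q^2 = (4 * real a * real b - real c ^ 2) / (4 * real a^2)"
    unfolding q_def using Delta_neg by (simp add: power_divide power_mult_distrib)
  define S where "S = (x - p)^2 + q^2"
  have S0: "S > 0" unfolding S_def using q0 by (simp add: add_nonneg_pos)
  define \<theta> where "\<theta> = arctan ((x - p) / q)"
  define u where "u = (\<lambda>s::real. real a * q * s + \<theta>)"
  define \<delta>0 where "\<delta>0 = (pi/2 - \<bar>\<theta>\<bar>) / (real a * q)"
  have th: "\<bar>\<theta>\<bar> < pi/2" unfolding \<theta>_def using arctan_lbound[of "(x - p) / q"] arctan_ubound[of "(x - p) / q"] by (auto simp: abs_less_iff)
  have d0: "\<delta>0 > 0" unfolding \<delta>0_def using th a0 q0 by simp
  have ubd: "-(pi/2) < u s \<and> u s < pi/2" if "\<bar>s\<bar> < \<delta>0" for s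
  proof -
    have "\<bar>real a * q * s\<bar> < pi/2 - \<bar>\<theta>\<bar>"
      using that a0 q0 unfolding \<delta>0_def by (simp add: abs_mult pos_less_divide_eq mult.commute)
    then show ?thesis unfolding u_def by (auto simp: abs_less_iff)
  qed
  have cpos: "cos (u s) > 0" if "\<bar>s\<bar> < \<delta>0" for s
    using ubd[OF that] by (intro cos_gt_zero_pi) auto
  define r where "r = real al0 / real a"
  define \<mu> where "\<mu> = real al0 * p + real ga0"
  define X where "X = (\<lambda>s. p + q * tan (u s))"
  define G where "G = (\<lambda>s. q / (sqrt S * cos (u s)))"
  define E where "E = (\<lambda>s. exp (\<mu> * s) * G s powr r)"
  have Gpos: "G s > 0" if "\<bar>s\<bar> < \<delta>0" for s
    unfolding G_def using cpos[OF that] q0 S0 by simp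
  have coef: "real a * X s ^ 2 + real c * X s + real b = real a * q^2 * (1 + tan (u s) ^ 2)" for s
  proof -
    have "real a * X s ^ 2 + real c * X s + real b
        = real a * (X s - p)^2 + real a * q^2"
      unfolding p_def qsq using a0 by (simp add: field_simps power2_eq_square)
    then show ?thesis unfolding X_def by (simp add: algebra_simps power_mult_distrib)
  qed
  have dX: "DERIV X s :> real a * X s ^ 2 + real c * X s + real b" if "\<bar>s\<bar> < \<delta>0" for s
  proof -
    have c: "cos (u s) \<noteq> 0" using cpos[OF that] by simp
    have "DERIV X s :> q * (inverse ((cos (u s))\<^sup>2) * (real a * q))"
      unfolding X_def u_def using c[unfolded u_def]
      by (auto intro!: derivative_eq_intros)
    moreover have "q * (inverse ((cos (u s))\<^sup>2) * (real a * q)) = real a * q^2 * (1 + tan (u s) ^ 2)"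
      using c by (simp add: tan_def field_simps power2_eq_square sin_squared_eq)
    ultimately show ?thesis using coef by simp
  qed
  have dE: "DERIV E s :> (real al0 * X s + real ga0) * E s" if "\<bar>s\<bar> < \<delta>0" for s
  proof -
    have c: "cos (u s) \<noteq> 0" using cpos[OF that] by simp
    have dG: "DERIV G s :> G s * (real a * q * tan (u s))"
    proof -
      have "DERIV G s :> - (q / sqrt S) * (- sin (u s) * (real a * q)) / (cos (u s))^2"
        unfolding G_def u_def using c[unfolded u_def] S0
        by (auto intro!: derivative_eq_intros simp: field_simps power2_eq_square)
      moreover have "- (q / sqrt S) * (- sin (u s) * (real a * q)) / (cos (u s))^2 = G s * (real a * q * tan (u s))"
        unfolding G_def tan_def using c S0 by (simp add: field_simps power2_eq_square)
      ultimately show ?thesis by simp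
    qed
    have "DERIV E s :> \<mu> * exp (\<mu> * s) * G s powr r + exp (\<mu> * s) * (G s powr r * (0 * ln (G s) + G s * (real a * q * tan (u s)) * r / G s))"
    proof -
      have p1: "DERIV (\<lambda>s. G s powr r) s :> G s powr r * (0 * ln (G s) + G s * (real a * q * tan (u s)) * r / G s)"
        using DERIV_powr[OF dG Gpos[OF that] DERIV_const[of r "at s"]] by simp
      have p2: "DERIV (\<lambda>s. exp (\<mu> * s)) s :> \<mu> * exp (\<mu> * s)"
        by (auto intro!: derivative_eq_intros)
      show ?thesis unfolding E_def using DERIV_mult[OF p2 p1] by (simp add: algebra_simps)
    qed
    moreover have "\<mu> * exp (\<mu> * s) * G s powr r + exp (\<mu> * s) * (G s powr r * (0 * ln (G s) + G s * (real a * q * tan (u s)) * r / G s))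
       = (real al0 * X s + real ga0) * E s"
      using Gpos[OF that] a0 unfolding E_def X_def \<mu>_def r_def by (simp add: field_simps)
    ultimately show ?thesis by simp
  qed
  define D where "D = (\<lambda>m s. E s * Ppoly a b c al0 b ga0 m (X s))"
  have dD: "DERIV (D m) s :> D (Suc m) s" if "\<bar>s\<bar> < \<delta>0" for m s
  proof -
    have "DERIV (\<lambda>s. Ppoly a b c al0 b ga0 m (X s)) s :>
        Pd a b c al0 b ga0 m (X s) * (real a * X s ^ 2 + real c * X s + real b)"
      by (rule DERIV_chain2[OF Ppoly_deriv dX[OF that]])
    from DERIV_mult[OF dE[OF that] this]
    show ?thesis unfolding D_def P_rec by (simp add: algebra_simps)
  qed
  have G0: "G 0 = 1"
  proof -
    have e1: "1 + ((x-p)/q)^2 = S/q^2" using q0 by (simp add: S_def field_simps power_divide)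
    have e2: "sqrt (S/q^2) = sqrt S / q" using q0 by (simp add: real_sqrt_divide)
    show ?thesis unfolding G_def u_def \<theta>_def using q0 S0 by (simp add: cos_arctan e1 e2)
  qed
  have E0: "E 0 = 1" unfolding E_def G0 by simp
  have X0: "X 0 = x" unfolding X_def u_def \<theta>_def using q0 by (simp add: tan_arctan)
  have D0: "D m 0 = Ppoly a b c al0 b ga0 m x" for m unfolding D_def E0 X0 by simp
  define \<delta>1 where "\<delta>1 = \<delta>0 / 2"
  have d1: "\<delta>1 > 0" "\<delta>1 < \<delta>0" using d0 by (auto simp: \<delta>1_def)
  have cX: "isCont (\<lambda>s. \<bar>X s\<bar>) s" if "-\<delta>1 \<le> s \<and> s \<le> \<delta>1" for s
  proof -
    have "\<bar>s\<bar> < \<delta>0" using that d1 by auto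
    then have "isCont X s" using dX DERIV_isCont by blast
    then show ?thesis by (intro continuous_intros)
  qed
  have cE: "isCont (\<lambda>s. \<bar>E s\<bar>) s" if "-\<delta>1 \<le> s \<and> s \<le> \<delta>1" for s
  proof -
    have "\<bar>s\<bar> < \<delta>0" using that d1 by auto
    then have "isCont E s" using dE DERIV_isCont by blast
    then show ?thesis by (intro continuous_intros)
  qed
  obtain Y where Y: "\<And>s. -\<delta>1 \<le> s \<and> s \<le> \<delta>1 \<Longrightarrow> \<bar>X s\<bar> \<le> Y"
    using isCont_bounded[of "-\<delta>1" \<delta>1 "\<lambda>s. \<bar>X s\<bar>"] cX d1 by auto
  obtain C where C: "\<And>s. -\<delta>1 \<le> s \<and> s \<le> \<delta>1 \<Longrightarrow> \<bar>E s\<bar> \<le> C"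
    using isCont_bounded[of "-\<delta>1" \<delta>1 "\<lambda>s. \<bar>E s\<bar>"] cE d1 by auto
  define Z where "Z = max Y 1"
  define K where "K = real al0*Z + real ga0 + real a*Z^2 + real c*Z + real b"
  have b0: "b > 0"
  proof (rule ccontr)
    assume "\<not> b > 0" then have "b = 0" by simp
    then show False using Delta_neg by simp
  qed
  have Z1: "Z \<ge> 1" by (simp add: Z_def)
  have K0: "K > 0" unfolding K_def using Z1 b0 by (simp add: add_nonneg_pos)
  define \<delta> where "\<delta> = min \<delta>1 (1/K)"
  have dpos: "\<delta> > 0" using d1 K0 by (simp add: \<delta>_def)
  have main: "(\<lambda>n. Ppoly a b c al0 b ga0 n x * t ^ n / fact n) sums E t" if t: "\<bar>t\<bar> < \<delta>" for t
  proof -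
    define R where "R = (\<lambda>n. E t - (\<Sum>m<n. D m 0 / fact m * t ^ m))"
    have Rb: "\<bar>R n\<bar> \<le> C * (K * \<bar>t\<bar>)^n" for n
    proof -
      have "\<exists>s. \<bar>s\<bar> \<le> \<bar>t\<bar> \<and> E t = (\<Sum>m<n. D m 0 / fact m * t ^ m) + D n s / fact n * t ^ n"
      proof (rule Maclaurin_bi_le)
        show "D 0 = E" by (rule ext) (simp add: D_def Ppoly_def)
        show "\<forall>m s. m < n \<and> \<bar>s\<bar> \<le> \<bar>t\<bar> \<longrightarrow> DERIV (D m) s :> D (Suc m) s"
          using t d1 by (auto simp: \<delta>_def intro!: dD)
      qed
      then obtain s where s: "\<bar>s\<bar> \<le> \<bar>t\<bar>" and Rs: "R n = D n s / fact n * t ^ n"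
        unfolding R_def by auto
      have sr: "-\<delta>1 \<le> s \<and> s \<le> \<delta>1" using s t by (auto simp: \<delta>_def)
      have XZ: "\<bar>X s\<bar> \<le> Z" using Y[OF sr] by (simp add: Z_def)
      have Pb: "\<bar>Ppoly a b c al0 b ga0 n (X s)\<bar> \<le> fact n * K^n"
        using P_bound[OF Z1 XZ] unfolding K_def by simp
      have "\<bar>D n s\<bar> \<le> C * (fact n * K^n)"
        unfolding D_def abs_mult using C[OF sr] Pb by (intro mult_mono) auto
      then have "\<bar>D n s\<bar> / fact n * \<bar>t\<bar>^n \<le> C * (fact n * K^n) / fact n * \<bar>t\<bar>^n"
        by (intro mult_right_mono divide_right_mono) auto
      then show ?thesis unfolding Rs abs_mult abs_divide power_abs
        by (simp add: power_mult_distrib)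
    qed
    have Kt: "K * \<bar>t\<bar> < 1" using t K0 by (simp add: \<delta>_def less_divide_eq mult.commute)
    have lim0: "(\<lambda>n. C * (K * \<bar>t\<bar>)^n) \<longlonglongrightarrow> 0"
      using Kt K0 by (intro tendsto_mult_right_zero LIMSEQ_power_zero) (simp add: abs_mult)
    have "R \<longlonglongrightarrow> 0"
    proof (rule tendsto_norm_zero_cancel, rule tendsto_sandwich[OF _ _ tendsto_const lim0])
      show "\<forall>\<^sub>F n in sequentially. 0 \<le> norm (R n)" by simp
      show "\<forall>\<^sub>F n in sequentially. norm (R n) \<le> C * (K * \<bar>t\<bar>)^n" using Rb by simp
    qed
    then have "(\<lambda>n. E t - R n) \<longlonglongrightarrow> E t - 0" by (intro tendsto_intros)
    then show ?thesis unfolding sums_def R_def D0 by (simp add: field_simps)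
  qed
  show ?thesis
    using dpos main unfolding balanced E_def G_def u_def \<theta>_def \<mu>_def r_def S_def by blast
qed


end
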